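(* Let $\mathcal{V}_t$ be a variety of $\Omega$-algebras (of a plural type) satisfying the identity $t(x,y)=x$ for some $t\in T_2$, and let $\Sigma$ be an equational base for $\mathcal{V}_t$. Then the Mal'tsev product $\mathcal{V}_t\circ\mathcal{S}$ is a variety; in fact $\mathcal{V}_t\circ\mathcal{S}=\mathcal{V}_t^{\,p}$, and $\Sigma^p$ is an equational base for $\mathcal{V}_t\circ\mathcal{S}$.
   Context: Standing conventions: $\Omega$-algebras are of a plural similarity type, i.e. there are no nullary operation symbols and at least one operation symbol of arity $\ge 2$. For $n\ge 1$, $T_n$ denotes the set of $\Omega$-terms in the variables $x_1,\dots,x_n$ in which each of these $n$ variables actually occurs. An identity is regular if exactly the same variables occur on both sides. $\mathcal{S}$ denotes the variety of $\Omega$-semilattices: all $\Omega$-algebras of the given type satisfying every regular identity (in such an algebra any term in $T_2$ is a semilattice operation, and every basic $n$-ary operation equals the $n$-fold product in this semilattice). For a class $\mathcal{V}$ of $\Omega$-algebras, the Mal'tsev product $\mathcal{V}\circ\mathcal{S}$ is the class of all $\Omega$-algebras $A$ having a congruence $\theta$ such that $A/\theta\in\mathcal{S}$ and every $\theta$-class (which is a subalgebra, since $\mathcal{S}$ is idempotent) belongs to $\mathcal{V}$; such $A$ is called a semilattice sum of $\mathcal{V}$-algebras. Prolongation: for an identity $\sigma$ of the form $u(y_1,\dots,y_n)=v(y_1,\dots,y_n)$ (where the variables of the terms $u,v$ are among $y_1,\dots,y_n$, not necessarily all occurring) and $m\ge1$, let $\sigma^p_m$ be the set of all identities $u(r_1,\dots,r_n)=v(r_1,\dots,r_n)$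 obtained by substituting $r_i(x_1,\dots,x_m)$ for $y_i$, where $r_1,\dots,r_n$ range over $T_m$. Let $\sigma^p=\bigcup_{m>0}\sigma^p_m$, and for a set $\Sigma$ of identities $\Sigma^p=\bigcup_{\sigma\in\Sigma}\sigma^p$. For a variety $\mathcal{V}$, its prolongation $\mathcal{V}^p$ is the variety defined by $\mathrm{Id}(\mathcal{V})^p$, where $\mathrm{Id}(\mathcal{V})$ is the set of all identities holding in $\mathcal{V}$. *)

theory Defs
  imports Main
begin

section \<open>Terms over a signature given by an arity function (variables x_1, x_2, ... are Var 1, Var 2, ...)\<close>

datatype 'f trm = Var nat | Op 'f "'f trm list"

fun vars :: "'f trm \<Rightarrow> nat set" where
  "vars (Var i) = {i}"
| "vars (Op f ts) = (\<Union>t\<in>set ts. vars t)"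

fun wf_trm :: "('f \<Rightarrow> nat) \<Rightarrow> 'f trm \<Rightarrow> bool" where
  "wf_trm ar (Var i) = True"
| "wf_trm ar (Op f ts) = (length ts = ar f \<and> (\<forall>t\<in>set ts. wf_trm ar t))"

fun eval :: "('f \<Rightarrow> 'a list \<Rightarrow> 'a) \<Rightarrow> (nat \<Rightarrow> 'a) \<Rightarrow> 'f trm \<Rightarrow> 'a" where
  "eval ops env (Var i) = env i"
| "eval ops env (Op f ts) = ops f (map (eval ops env) ts)"

fun subst :: "(nat \<Rightarrow> 'f trm) \<Rightarrow> 'f trm \<Rightarrow> 'f trm" where
  "subst r (Var i) = r i"
| "subst r (Op f ts) = Op f (map (subst r) ts)"

definition T :: "('f \<Rightarrow> nat) \<Rightarrow> nat \<Rightarrow> 'f trm set" where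
  "T ar n = {t. wf_trm ar t \<and> vars t = {1..n}}"

definition idents :: "('f \<Rightarrow> nat) \<Rightarrow> ('f trm \<times> 'f trm) set" where
  "idents ar = {(u, v). wf_trm ar u \<and> wf_trm ar v}"

definition regular_idents :: "('f \<Rightarrow> nat) \<Rightarrow> ('f trm \<times> 'f trm) set" where
  "regular_idents ar = {(u, v). wf_trm ar u \<and> wf_trm ar v \<and> vars u = vars v}"

definition is_alg :: "('f \<Rightarrow> nat) \<Rightarrow> 'a set \<Rightarrow> ('f \<Rightarrow> 'a list \<Rightarrow> 'a) \<Rightarrow> bool" where
  "is_alg ar A ops = (\<forall>f xs. length xs = ar f \<and> set xs \<subseteq> A \<longrightarrow> ops f xs \<in> A)"

definition holds :: "'a set \<Rightarrow> ('f \<Rightarrow> 'a list \<Rightarrow> 'a) \<Rightarrow> 'f trm \<times> 'f trm \<Rightarrow> bool" where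
  "holds A ops e = (\<forall>env. (\<forall>i. env i \<in> A) \<longrightarrow> eval ops env (fst e) = eval ops env (snd e))"

definition models :: "('f \<Rightarrow> nat) \<Rightarrow> 'a set \<Rightarrow> ('f \<Rightarrow> 'a list \<Rightarrow> 'a) \<Rightarrow> ('f trm \<times> 'f trm) set \<Rightarrow> bool" where
  "models ar A ops E = (is_alg ar A ops \<and> (\<forall>e\<in>E. holds A ops e))"

definition is_semilattice :: "('f \<Rightarrow> nat) \<Rightarrow> 'a set \<Rightarrow> ('f \<Rightarrow> 'a list \<Rightarrow> 'a) \<Rightarrow> bool" where
  "is_semilattice ar A ops = models ar A ops (regular_idents ar)"

text \<open>Models are taken with
  carrier type 'f trm set, which is large enough to contain (a copy of) the free
  algebra of countable rank, so by Birkhoff this is exactly Id(Mod E).\<close>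
definition Id_of :: "('f \<Rightarrow> nat) \<Rightarrow> ('f trm \<times> 'f trm) set \<Rightarrow> ('f trm \<times> 'f trm) set" where
  "Id_of ar E = {e \<in> idents ar.
     \<forall>(B :: 'f trm set set) opsB. models ar B opsB E \<longrightarrow> holds B opsB e}"

definition congruence :: "('f \<Rightarrow> nat) \<Rightarrow> 'a set \<Rightarrow> ('f \<Rightarrow> 'a list \<Rightarrow> 'a) \<Rightarrow> 'a rel \<Rightarrow> bool" where
  "congruence ar A ops \<theta> = (equiv A \<theta> \<and>
     (\<forall>f xs ys. length xs = ar f \<and> length ys = ar f \<and> set xs \<subseteq> A \<and> set ys \<subseteq> A \<and>
        list_all2 (\<lambda>x y. (x, y) \<in> \<theta>) xs ys \<longrightarrow> (ops f xs, ops f ys) \<in> \<theta>))"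

definition quot_ops :: "'a rel \<Rightarrow> ('f \<Rightarrow> 'a list \<Rightarrow> 'a) \<Rightarrow> 'f \<Rightarrow> 'a set list \<Rightarrow> 'a set" where
  "quot_ops \<theta> ops f Xs = \<theta> `` {ops f (map (\<lambda>X. SOME x. x \<in> X) Xs)}"

definition malcev_S :: "('f \<Rightarrow> nat) \<Rightarrow> ('f trm \<times> 'f trm) set \<Rightarrow> 'a set \<Rightarrow> ('f \<Rightarrow> 'a list \<Rightarrow> 'a) \<Rightarrow> bool" where
  "malcev_S ar E A ops = (is_alg ar A ops \<and>
     (\<exists>\<theta>. congruence ar A ops \<theta> \<and> is_semilattice ar (A // \<theta>) (quot_ops \<theta> ops) \<and>
          (\<forall>X \<in> A // \<theta>. models ar X ops E)))"

definition prolong :: "('f \<Rightarrow> nat) \<Rightarrow> ('f trm \<times> 'f trm) set \<Rightarrow> ('f trm \<times> 'f trm) set" where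
  "prolong ar E = {(subst r u, subst r v) | u v r m. (u, v) \<in> E \<and> m > 0 \<and>
      (\<forall>i \<in> vars u \<union> vars v. r i \<in> T ar m)}"

end

theory Submission
  imports Defs
begin


lemma eval_subst: "eval ops env (subst \<sigma> p) = eval ops (\<lambda>i. eval ops env (\<sigma> i)) p"
  by (induction p) (auto cong: map_cong)

lemma vars_subst: "vars (subst \<sigma> p) = (\<Union>i\<in>vars p. vars (\<sigma> i))"
  by (induction p) auto

lemma subst_Var: "subst Var p = p"
  by (induction p) (auto simp: map_idI)

lemma wf_subst: "wf_trm ar p \<Longrightarrow> (\<forall>i\<in>vars p. wf_trm ar (\<sigma> i)) \<Longrightarrow> wf_trm ar (subst \<sigma> p)"
  by (induction p) auto

lemma eval_cong: "(\<forall>i\<in>vars p. e1 i = e2 i) \<Longrightarrow> eval ops e1 p = eval ops e2 p"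
  by (induction p) (auto cong: map_cong)

lemma finite_vars: "finite (vars p)"
  by (induction p) auto

lemma vars_ne: "\<forall>f. ar f \<ge> 1 \<Longrightarrow> wf_trm ar p \<Longrightarrow> vars p \<noteq> {}"
proof (induction p)
  case (Var x)
  then show ?case by simp
next
  case (Op f ts)
  then have "ts \<noteq> []" by (metis length_0_conv not_one_le_zero wf_trm.simps(2))
  then obtain s where "s \<in> set ts" by (meson list.set_sel(1))
  with Op show ?case by auto
qed

lemma eval_closed: "is_alg ar X ops \<Longrightarrow> wf_trm ar p \<Longrightarrow> (\<forall>i. env i \<in> X) \<Longrightarrow> eval ops env p \<in> X"
proof (induction p)
  case (Op f ts)
  then have "length (map (eval ops env) ts) = ar f \<and> set (map (eval ops env) ts) \<subseteq> X" by auto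
  then show ?case using Op.prems(1) unfolding is_alg_def by simp
qed simp

lemma transfer:
  fixes X :: "'a set"
  assumes EI: "E \<subseteq> idents ar" and e: "e \<in> Id_of ar E" and M: "models ar X ops E"
    and env: "\<forall>i. env i \<in> X"
  shows "eval ops env (fst e) = eval ops env (snd e)"
proof -
  define R where "R = (\<lambda>s s'. wf_trm ar s \<and> wf_trm ar s' \<and> (\<forall>(Y::'a set) opsY (envY :: nat \<Rightarrow> 'a).
        models ar Y opsY E \<and> (\<forall>i. envY i \<in> Y) \<longrightarrow> eval opsY envY s = eval opsY envY s'))"
  define Cl where "Cl s = {s'. R s s'}" for s
  define F where "F = Cl ` {s. wf_trm ar s}"
  define opsF where "opsF f Ls = Cl (Op f (map (\<lambda>L. SOME s. s \<in> L) Ls))" for f Ls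
  have Rrefl: "wf_trm ar s \<Longrightarrow> R s s" for s by (simp add: R_def)
  have Rsym: "R s s' \<Longrightarrow> R s' s" for s s' by (simp add: R_def)
  have Rtrans: "R s s' \<Longrightarrow> R s' s'' \<Longrightarrow> R s s''" for s s' s'' by (simp add: R_def)
  have ClI: "wf_trm ar s \<Longrightarrow> s \<in> Cl s" for s by (simp add: Cl_def Rrefl)
  have Cl_eq: "R s s' \<Longrightarrow> Cl s = Cl s'" for s s'
    unfolding Cl_def using Rsym Rtrans by blast
  have Cl_some: "wf_trm ar s \<Longrightarrow> R s (SOME x. x \<in> Cl s)" for s
    by (metis (mono_tags, lifting) ClI Cl_def mem_Collect_eq someI)
  have Rop: "length ss = ar f \<Longrightarrow> list_all2 R ss ss' \<Longrightarrow> R (Op f ss) (Op f ss')" for f ss ss'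
  proof -
    assume l: "length ss = ar f" and la: "list_all2 R ss ss'"
    have len: "length ss' = ar f" using l la list_all2_lengthD by force
    have wf1: "wf_trm ar (Op f ss)" using l la unfolding R_def
      by (auto simp: list_all2_conv_all_nth in_set_conv_nth)
    have wf2: "wf_trm ar (Op f ss')" using len la unfolding R_def
      by (auto simp: list_all2_conv_all_nth in_set_conv_nth)
    show ?thesis unfolding R_def
    proof (intro conjI wf1 wf2 allI impI)
      fix Y :: "'a set" and opsY and envY :: "nat \<Rightarrow> 'a"
      assume a: "models ar Y opsY E \<and> (\<forall>i. envY i \<in> Y)"
      have "map (eval opsY envY) ss = map (eval opsY envY) ss'"
        using la a unfolding R_def by (auto simp: list_all2_conv_all_nth intro: nth_equalityI)
      then show "eval opsY envY (Op f ss) = eval opsY envY (Op f ss')" by simp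
    qed
  qed
  have key: "wf_trm ar p \<Longrightarrow> (\<forall>i. wf_trm ar (\<sigma> i)) \<Longrightarrow> eval opsF (\<lambda>i. Cl (\<sigma> i)) p = Cl (subst \<sigma> p)" for p \<sigma>
  proof (induction p)
    case (Var x)
    then show ?case by simp
  next
    case (Op f ts)
    have l: "length ts = ar f" and w: "\<forall>s\<in>set ts. wf_trm ar s" using Op.prems by auto
    have "eval opsF (\<lambda>i. Cl (\<sigma> i)) (Op f ts) = opsF f (map (\<lambda>q. Cl (subst \<sigma> q)) ts)"
      using Op.IH Op.prems w by (simp cong: map_cong)
    also have "\<dots> = Cl (Op f (map (\<lambda>q. SOME x. x \<in> Cl (subst \<sigma> q)) ts))"
      by (simp add: opsF_def comp_def)
    also have "\<dots> = Cl (Op f (map (subst \<sigma>) ts))"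
    proof (rule Cl_eq, rule Rsym, rule Rop)
      show "length (map (subst \<sigma>) ts) = ar f" using l by simp
      show "list_all2 R (map (subst \<sigma>) ts) (map (\<lambda>q. SOME x. x \<in> Cl (subst \<sigma> q)) ts)"
        using w Op.prems by (auto simp: list_all2_conv_all_nth intro!: Cl_some wf_subst)
    qed
    finally show ?case by simp
  qed
  have FM: "models ar F opsF E"
    unfolding models_def
  proof (intro conjI ballI)
    show "is_alg ar F opsF" unfolding is_alg_def
    proof (intro allI impI)
      fix f xs assume a: "length xs = ar f \<and> set xs \<subseteq> F"
      have "\<forall>L\<in>set xs. wf_trm ar (SOME s. s \<in> L)"
      proof
        fix L assume "L \<in> set xs"
        then obtain s where "wf_trm ar s" "L = Cl s" using a F_def by auto
        then show "wf_trm ar (SOME s. s \<in> L)" using Cl_some R_def by auto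
      qed
      then have "wf_trm ar (Op f (map (\<lambda>L. SOME s. s \<in> L) xs))" using a by auto
      then show "opsF f xs \<in> F" by (simp add: opsF_def F_def)
    qed
  next
    fix uv assume uv: "uv \<in> E"
    obtain u v where uvd: "uv = (u, v)" by force
    have wu: "wf_trm ar u" and wv: "wf_trm ar v" using uv uvd EI by (auto simp: idents_def)
    show "holds F opsF uv" unfolding holds_def
    proof (intro allI impI)
      fix envF :: "nat \<Rightarrow> _" assume eF: "\<forall>i. envF i \<in> F"
      define \<sigma> where "\<sigma> i = (SOME s. wf_trm ar s \<and> envF i = Cl s)" for i :: nat
      have \<sigma>: "wf_trm ar (\<sigma> i) \<and> envF i = Cl (\<sigma> i)" for i
        unfolding \<sigma>_def by (rule someI_ex) (use eF F_def in auto)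
      have envF: "envF = (\<lambda>i. Cl (\<sigma> i))" using \<sigma> by auto
      have "R (subst \<sigma> u) (subst \<sigma> v)"
        unfolding R_def
      proof (intro conjI allI impI)
        show "wf_trm ar (subst \<sigma> u)" "wf_trm ar (subst \<sigma> v)" using wu wv \<sigma> by (auto intro: wf_subst)
        fix Y :: "'a set" and opsY and envY :: "nat \<Rightarrow> 'a"
        assume a: "models ar Y opsY E \<and> (\<forall>i. envY i \<in> Y)"
        have "\<forall>i. eval opsY envY (\<sigma> i) \<in> Y" using a \<sigma> eval_closed models_def by metis
        then show "eval opsY envY (subst \<sigma> u) = eval opsY envY (subst \<sigma> v)"
          using a uv uvd by (auto simp: eval_subst models_def holds_def)
      qed
      then show "eval opsF envF (fst uv) = eval opsF envF (snd uv)"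
        using key[of u \<sigma>] key[of v \<sigma>] wu wv \<sigma> envF uvd Cl_eq by auto
    qed
  qed
  obtain p q where pq: "e = (p, q)" by force
  have wp: "wf_trm ar p" and wq: "wf_trm ar q" using e pq by (auto simp: Id_of_def idents_def)
  have "holds F opsF e" using e FM by (auto simp: Id_of_def)
  then have "eval opsF (\<lambda>i. Cl (Var i)) p = eval opsF (\<lambda>i. Cl (Var i)) q"
    unfolding holds_def pq using F_def by auto
  then have "Cl p = Cl q" using key[of p Var] key[of q Var] wp wq by (simp add: subst_Var)
  then have "R p q" using ClI[OF wq] unfolding Cl_def by blast
  then show ?thesis using M env pq by (simp add: R_def)
qed



lemma quot_eval:
  assumes cg: "congruence ar A ops \<theta>" and isA: "is_alg ar A ops" and wp: "wf_trm ar p"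
    and env: "\<forall>i. env i \<in> A"
  shows "eval (quot_ops \<theta> ops) (\<lambda>i. \<theta> `` {env i}) p = \<theta> `` {eval ops env p}"
  using wp
proof (induction p)
  case (Var x)
  then show ?case by simp
next
  case (Op f ts)
  have eq: "equiv A \<theta>" using cg by (simp add: congruence_def)
  have l: "length ts = ar f" and w: "\<forall>s\<in>set ts. wf_trm ar s" using Op.prems by auto
  have inA: "eval ops env s \<in> A" if "s \<in> set ts" for s using eval_closed[OF isA _ env] w that by auto
  define xs where "xs = map (eval ops env) ts"
  define ys where "ys = map (\<lambda>q. SOME x. x \<in> \<theta> `` {eval ops env q}) ts"
  have rel: "(eval ops env q, SOME x. x \<in> \<theta> `` {eval ops env q}) \<in> \<theta>" if "q \<in> set ts" for q
  proof -
    have "eval ops env q \<in> \<theta> `` {eval ops env q}" by (rule equiv_class_self[OF eq inA[OF that]])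
    then have "(SOME x. x \<in> \<theta> `` {eval ops env q}) \<in> \<theta> `` {eval ops env q}" by (rule someI)
    then show ?thesis by simp
  qed
  have ysA: "set ys \<subseteq> A" using rel eq unfolding ys_def equiv_def refl_on_def by auto
  have xsA: "set xs \<subseteq> A" using inA xs_def by auto
  have la: "list_all2 (\<lambda>x y. (x, y) \<in> \<theta>) xs ys"
    using rel by (auto simp: xs_def ys_def list_all2_conv_all_nth)
  have "(ops f xs, ops f ys) \<in> \<theta>"
    using cg la xsA ysA l unfolding congruence_def xs_def ys_def by auto
  then have cl: "\<theta> `` {ops f ys} = \<theta> `` {ops f xs}" using eq by (metis equiv_class_eq_iff)
  have "eval (quot_ops \<theta> ops) (\<lambda>i. \<theta> `` {env i}) (Op f ts)
      = quot_ops \<theta> ops f (map (\<lambda>q. \<theta> `` {eval ops env q}) ts)"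
    using Op.IH w by (simp cong: map_cong)
  also have "\<dots> = \<theta> `` {ops f ys}" by (simp add: quot_ops_def ys_def comp_def)
  finally show ?case using cl xs_def by simp
qed

lemma models_mono: "models ar A ops E' \<Longrightarrow> E \<subseteq> E' \<Longrightarrow> models ar A ops E"
  unfolding models_def by auto

lemma dir1:
  fixes A :: "'a set"
  assumes nn: "\<forall>f. ar f \<ge> 1" and EI: "E \<subseteq> idents ar" and mal: "malcev_S ar E A ops"
  shows "models ar A ops (prolong ar (Id_of ar E))"
proof -
  have isA: "is_alg ar A ops" using mal by (simp add: malcev_S_def)
  obtain \<theta> where cg: "congruence ar A ops \<theta>" and sl: "is_semilattice ar (A // \<theta>) (quot_ops \<theta> ops)"
    and cls: "\<forall>X \<in> A // \<theta>. models ar X ops E" using mal by (auto simp: malcev_S_def)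
  have eq: "equiv A \<theta>" using cg by (simp add: congruence_def)
  show ?thesis unfolding models_def
  proof (intro conjI isA ballI)
    fix e assume "e \<in> prolong ar (Id_of ar E)"
    then obtain u v r m where e: "e = (subst r u, subst r v)" and uv: "(u, v) \<in> Id_of ar E"
      and m: "m > 0" and r: "\<forall>i \<in> vars u \<union> vars v. r i \<in> T ar m"
      unfolding prolong_def by blast
    have wu: "wf_trm ar u" using uv by (auto simp: Id_of_def idents_def)
    define S where "S = vars u \<union> vars v"
    obtain i0 where i0: "i0 \<in> S" using vars_ne[OF nn wu] S_def by auto
    show "holds A ops e" unfolding holds_def
    proof (intro allI impI)
      fix env :: "nat \<Rightarrow> 'a" assume env: "\<forall>i. env i \<in> A"
      define a0 where "a0 = eval ops env (r i0)"
      have wr: "wf_trm ar (r i)" "vars (r i) = {1..m}" if "i \<in> S" for i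
        using r that S_def by (auto simp: T_def)
      have a0A: "a0 \<in> A" using eval_closed[OF isA wr(1)[OF i0] env] a0_def by simp
      define X where "X = \<theta> `` {a0}"
      have XQ: "X \<in> A // \<theta>" using a0A X_def by (simp add: quotientI)
      have inX: "eval ops env (r i) \<in> X" if "i \<in> S" for i
      proof -
        have reg: "(r i0, r i) \<in> regular_idents ar" using wr i0 that by (simp add: regular_idents_def)
        have Qenv: "\<forall>j. \<theta> `` {env j} \<in> A // \<theta>" using env by (simp add: quotientI)
        have "eval (quot_ops \<theta> ops) (\<lambda>j. \<theta> `` {env j}) (r i0) = eval (quot_ops \<theta> ops) (\<lambda>j. \<theta> `` {env j}) (r i)"
          using sl reg Qenv unfolding is_semilattice_def models_def holds_def by auto
        then have "\<theta> `` {a0} = \<theta> `` {eval ops env (r i)}"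
          using quot_eval[OF cg isA wr(1)[OF i0] env] quot_eval[OF cg isA wr(1)[OF that] env] a0_def by simp
        moreover have "eval ops env (r i) \<in> A" using eval_closed[OF isA wr(1)[OF that] env] .
        ultimately show ?thesis using eq X_def by (metis equiv_class_self)
      qed
      have a0X: "a0 \<in> X" using inX[OF i0] a0_def by simp
      define env2 where "env2 i = (if i \<in> S then eval ops env (r i) else a0)" for i
      have env2X: "\<forall>i. env2 i \<in> X" using inX a0X env2_def by auto
      have "eval ops env2 u = eval ops env2 v"
        using transfer[OF EI uv _ env2X] cls XQ by simp
      moreover have "eval ops env (subst r u) = eval ops env2 u"
        unfolding eval_subst by (rule eval_cong) (auto simp: env2_def S_def)
      moreover have "eval ops env (subst r v) = eval ops env2 v"
        unfolding eval_subst by (rule eval_cong) (auto simp: env2_def S_def)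
      ultimately show "eval ops env (fst e) = eval ops env (snd e)" using e by simp
    qed
  qed
qed



lemma prolongI: "(u, v) \<in> E \<Longrightarrow> m > 0 \<Longrightarrow> (\<forall>i\<in>vars u \<union> vars v. r i \<in> T ar m)
   \<Longrightarrow> (subst r u, subst r v) \<in> prolong ar E"
  unfolding prolong_def
  by (rule CollectI, rule exI[of _ u], rule exI[of _ v], rule exI[of _ r], rule exI[of _ m]) simp

lemma dir2:
  fixes A :: "'a set" and ar :: "'f \<Rightarrow> nat" and t :: "'f trm"
  assumes nn: "\<forall>f. ar f \<ge> 1" and EI: "E \<subseteq> idents ar" and tT: "t \<in> T ar 2"
    and tid: "(t, Var 1) \<in> Id_of ar E" and M: "models ar A ops (prolong ar E)"
  shows "malcev_S ar E A ops"
proof -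
  have isA: "is_alg ar A ops" using M unfolding models_def by (rule conjunct1)
  have wft: "wf_trm ar t" using tT unfolding T_def by simp
  have vt: "vars t = {1,2}"
  proof -
    have "vars t = {1..2}" using tT unfolding T_def by simp
    also have "{1..2::nat} = {1,2}" by auto
    finally show ?thesis .
  qed
  define tt where "tt a b = eval ops (\<lambda>i. if i = (1::nat) then a else b) t" for a b
  define tapp where "tapp p q = subst (\<lambda>i. if i = (1::nat) then p else q) t" for p q :: "'f trm"
  have tapp_eval: "eval ops env (tapp p q) = tt (eval ops env p) (eval ops env q)" for env p q
    unfolding tapp_def tt_def eval_subst by (rule eval_cong) auto
  have tapp_vars: "vars (tapp p q) = vars p \<union> vars q" for p q
    unfolding tapp_def vars_subst vt by auto
  have tapp_wf: "wf_trm ar p \<Longrightarrow> wf_trm ar q \<Longrightarrow> wf_trm ar (tapp p q)" for p q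
    unfolding tapp_def by (rule wf_subst[OF wft]) auto
  have Tex: "0 < m \<Longrightarrow> \<exists>W. W \<in> T ar m" for m
  proof (induction m)
    case 0 thus ?case by simp
  next
    case (Suc m)
    show ?case
    proof (cases "m = 0")
      case True thus ?thesis by (intro exI[of _ "Var 1"]) (simp add: T_def)
    next
      case False
      then obtain W where W: "W \<in> T ar m" using Suc by auto
      have "tapp W (Var (Suc m)) \<in> T ar (Suc m)"
        using W by (auto simp: T_def tapp_vars tapp_wf)
      thus ?thesis by blast
    qed
  qed
  define Bt where "Bt m c = (\<lambda>r. eval ops c r) ` T ar m" for m c
  have Bt_model: "models ar (Bt m c) ops E" if m: "0 < m" and c: "\<forall>i. c i \<in> A" for m c
  proof -
    have alg: "is_alg ar (Bt m c) ops" unfolding is_alg_def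
    proof (intro allI impI)
      fix f xs assume a: "length xs = ar f \<and> set xs \<subseteq> Bt m c"
      define rs where "rs = map (\<lambda>x. SOME r. r \<in> T ar m \<and> eval ops c r = x) xs"
      have rx: "(SOME r. r \<in> T ar m \<and> eval ops c r = x) \<in> T ar m \<and> eval ops c (SOME r. r \<in> T ar m \<and> eval ops c r = x) = x"
        if "x \<in> set xs" for x
        by (rule someI_ex) (use a that Bt_def in auto)
      have rs: "\<forall>r\<in>set rs. r \<in> T ar m" using rx rs_def by auto
      have ev: "map (eval ops c) rs = xs" using rx rs_def by (simp add: map_idI)
      have "xs \<noteq> []" using a nn by (metis le_zero_eq length_0_conv not_one_le_zero)
      then have ne: "rs \<noteq> []" using rs_def by simp
      have "Op f rs \<in> T ar m"
        using rs ne a rs_def unfolding T_def by auto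
      then show "ops f xs \<in> Bt m c" unfolding Bt_def using ev by force
    qed
    show ?thesis unfolding models_def
    proof (intro conjI alg ballI)
      fix uv assume uv: "uv \<in> E"
      obtain u v where uvd: "uv = (u,v)" by force
      show "holds (Bt m c) ops uv" unfolding holds_def
      proof (intro allI impI)
        fix env :: "nat \<Rightarrow> 'a" assume e: "\<forall>i. env i \<in> Bt m c"
        define r where "r i = (SOME r. r \<in> T ar m \<and> eval ops c r = env i)" for i :: nat
        have r: "r i \<in> T ar m \<and> eval ops c (r i) = env i" for i
        proof -
          have "env i \<in> Bt m c" using e by simp
          then obtain x where "x \<in> T ar m" "eval ops c x = env i" unfolding Bt_def by auto
          then have "\<exists>x. x \<in> T ar m \<and> eval ops c x = env i" by blast
          then show ?thesis unfolding r_def by (rule someI_ex)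
        qed
        have "(subst r u, subst r v) \<in> prolong ar E" using uv uvd r m by (intro prolongI) auto
        then have "eval ops c (subst r u) = eval ops c (subst r v)"
          using M c by (auto simp: models_def holds_def)
        moreover have "(\<lambda>i. eval ops c (r i)) = env" using r by auto
        ultimately show "eval ops env (fst uv) = eval ops env (snd uv)"
          using uvd by (simp add: eval_subst)
      qed
    qed
  qed
  have BT: "tt a b = a" if "0<m" "\<forall>i. c i \<in> A" "a \<in> Bt m c" "b \<in> Bt m c" for m c a b
    using transfer[OF EI tid Bt_model[OF that(1,2)], of "\<lambda>i. if i = 1 then a else b"] that(3,4)
    by (simp add: tt_def)
  have BtA: "Bt m c \<subseteq> A" if "\<forall>i. c i \<in> A" for m c
    using eval_closed[OF isA _ that] unfolding Bt_def T_def by auto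
  define \<theta> where "\<theta> = {(a,b). a \<in> A \<and> b \<in> A \<and> tt a b = a \<and> tt b a = b}"
  have REG: "(eval ops env p, eval ops env q) \<in> \<theta>"
    if wp: "wf_trm ar p" and wq: "wf_trm ar q" and vpq: "vars p = vars q" and env: "\<forall>i. env i \<in> A" for p q env
  proof -
    let ?S = "vars p"
    have fin: "finite ?S" and ne: "?S \<noteq> {}" using finite_vars vars_ne[OF nn wp] by auto
    define m where "m = card ?S"
    have m0: "0 < m" unfolding m_def using fin ne by (simp add: card_gt_0_iff)
    have "card ?S = card {1..m}" unfolding m_def by simp
    then have "\<exists>h. bij_betw h ?S {1..m}" by (rule finite_same_card_bij[OF fin finite_atLeastAtMost])
    then obtain \<rho> where \<rho>: "bij_betw \<rho> ?S {1..m}" by blast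
    define c where "c j = env (inv_into ?S \<rho> j)" for j
    have c: "\<forall>i. c i \<in> A" using env c_def by auto
    have inT: "subst (Var \<circ> \<rho>) s \<in> T ar m" if "wf_trm ar s" "vars s = ?S" for s
    proof -
      have "vars (subst (Var \<circ> \<rho>) s) = \<rho> ` ?S" using that(2) by (auto simp: vars_subst)
      also have "\<dots> = {1..m}" using \<rho> by (simp add: bij_betw_def)
      finally show ?thesis using that(1) by (auto simp: T_def intro: wf_subst)
    qed
    have ev: "eval ops c (subst (Var \<circ> \<rho>) s) = eval ops env s" if "vars s = ?S" for s
      unfolding eval_subst by (rule eval_cong) (use that in \<open>simp add: c_def bij_betw_inv_into_left[OF \<rho>]\<close>)
    have "eval ops env p \<in> Bt m c" using inT[OF wp refl] ev[OF refl] unfolding Bt_def by force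
    moreover have "eval ops env q \<in> Bt m c" using inT[OF wq vpq[symmetric]] ev[OF vpq[symmetric]]
      unfolding Bt_def by force
    ultimately show ?thesis using BT[OF m0 c] BtA[OF c] unfolding \<theta>_def by auto
  qed
  have refl: "(a, a) \<in> \<theta>" if "a \<in> A" for a
    using REG[of "Var 0" "Var 0" "\<lambda>_. a"] that by simp
  have sym: "(a, b) \<in> \<theta> \<Longrightarrow> (b, a) \<in> \<theta>" for a b unfolding \<theta>_def by auto
  have trans: "(a, d) \<in> \<theta>" if ab: "(a, b) \<in> \<theta>" and bd: "(b, d) \<in> \<theta>" for a b d
  proof -
    define env where "env i = (if i = (0::nat) then a else if i = 1 then b else d)" for i
    have env: "\<forall>i. env i \<in> A" using ab bd unfolding env_def \<theta>_def by auto
    let ?P = "tapp (tapp (Var 0) (Var 1)) (tapp (Var 1) (Var 2))"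
    let ?Q = "tapp (tapp (Var 2) (Var 1)) (tapp (Var 1) (Var 0))"
    have "(eval ops env ?P, eval ops env ?Q) \<in> \<theta>"
      by (rule REG[OF _ _ _ env]) (auto simp: tapp_wf tapp_vars)
    moreover have "eval ops env ?P = a" using ab bd by (simp add: tapp_eval env_def \<theta>_def)
    moreover have "eval ops env ?Q = d" using ab bd by (simp add: tapp_eval env_def \<theta>_def)
    ultimately show ?thesis by simp
  qed
  have sub: "\<theta> \<subseteq> A \<times> A" unfolding \<theta>_def by auto
  have eqv: "equiv A \<theta>"
  proof (rule equivI)
    show "\<theta> \<subseteq> A \<times> A" by (rule sub)
    show "refl_on A \<theta>" using sub refl by (auto simp: refl_on_def)
    show "sym \<theta>" using sym by (auto intro: symI)
    show "trans \<theta>" using trans by (auto intro: transI)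
  qed
  have opcong: "(ops f xs, ops f ys) \<in> \<theta>"
    if l: "length xs = ar f" "length ys = ar f" and sx: "set xs \<subseteq> A" "set ys \<subseteq> A"
      and la: "list_all2 (\<lambda>x y. (x, y) \<in> \<theta>) xs ys" for f xs ys
  proof -
    define k where "k = ar f"
    have k: "k \<ge> 1" using nn k_def by auto
    have lx: "length xs = k" "length ys = k" using l k_def by auto
    define env where "env i = (if i < length (xs @ ys) then (xs @ ys) ! i else hd xs)" for i
    have env: "\<forall>i. env i \<in> A"
    proof
      fix i
      have "xs \<noteq> []" using lx k by auto
      then have h: "hd xs \<in> A" using sx by auto
      have "i < length (xs @ ys) \<Longrightarrow> (xs @ ys) ! i \<in> A" using sx
        by (metis nth_mem set_append subsetD Un_subset_iff)
      then show "env i \<in> A" using h unfolding env_def by auto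
    qed
    have ex: "env i = xs ! i" if "i < k" for i using that lx by (simp add: env_def nth_append)
    have ey: "env (k + i) = ys ! i" if "i < k" for i using that lx by (simp add: env_def nth_append)
    have rel: "(xs ! i, ys ! i) \<in> \<theta>" if "i < k" for i using la that lx by (simp add: list_all2_conv_all_nth)
    let ?P = "Op f (map (\<lambda>i. tapp (Var i) (Var (k + i))) [0..<k])"
    let ?Q = "Op f (map (\<lambda>i. tapp (Var (k + i)) (Var i)) [0..<k])"
    have "(eval ops env ?P, eval ops env ?Q) \<in> \<theta>"
      by (rule REG[OF _ _ _ env]) (auto simp: tapp_wf tapp_vars k_def)
    moreover have "eval ops env ?P = ops f xs"
    proof -
      have "map (eval ops env) (map (\<lambda>i. tapp (Var i) (Var (k + i))) [0..<k]) = map (\<lambda>i. xs ! i) [0..<k]"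
        using rel ex ey by (auto simp: tapp_eval \<theta>_def)
      also have "\<dots> = xs" by (metis lx(1) map_nth)
      finally show ?thesis by simp
    qed
    moreover have "eval ops env ?Q = ops f ys"
    proof -
      have "map (eval ops env) (map (\<lambda>i. tapp (Var (k + i)) (Var i)) [0..<k]) = map (\<lambda>i. ys ! i) [0..<k]"
        using rel ex ey by (auto simp: tapp_eval \<theta>_def)
      also have "\<dots> = ys" by (metis lx(2) map_nth)
      finally show ?thesis by simp
    qed
    ultimately show ?thesis by simp
  qed
  have cg: "congruence ar A ops \<theta>"
    unfolding congruence_def using eqv opcong by blast
  have sl: "is_semilattice ar (A // \<theta>) (quot_ops \<theta> ops)"
    unfolding is_semilattice_def models_def
  proof (intro conjI ballI)
    show "is_alg ar (A // \<theta>) (quot_ops \<theta> ops)" unfolding is_alg_def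
    proof (intro allI impI)
      fix f Xs assume a: "length Xs = ar f \<and> set Xs \<subseteq> A // \<theta>"
      have "\<forall>X\<in>set Xs. (SOME x. x \<in> X) \<in> A"
      proof
        fix X assume "X \<in> set Xs"
        then have XQ: "X \<in> A // \<theta>" using a by auto
        then obtain x where "x \<in> A" "X = \<theta> `` {x}" by (auto elim: quotientE)
        then have "x \<in> X" using eqv equiv_class_self by metis
        then have "(SOME x. x \<in> X) \<in> X" by (rule someI)
        then show "(SOME x. x \<in> X) \<in> A" using XQ eqv in_quotient_imp_subset by blast
      qed
      then have "ops f (map (\<lambda>X. SOME x. x \<in> X) Xs) \<in> A"
      proof -
        assume h: "\<forall>X\<in>set Xs. (SOME x. x \<in> X) \<in> A"
        have "length (map (\<lambda>X. SOME x. x \<in> X) Xs) = ar f" using a by simp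
        moreover have "set (map (\<lambda>X. SOME x. x \<in> X) Xs) \<subseteq> A" using h by auto
        ultimately show ?thesis using isA unfolding is_alg_def by blast
      qed
      then show "quot_ops \<theta> ops f Xs \<in> A // \<theta>" by (simp add: quot_ops_def quotientI)
    qed
  next
    fix e assume e: "e \<in> regular_idents ar"
    obtain u v where uv: "e = (u, v)" "wf_trm ar u" "wf_trm ar v" "vars u = vars v"
      using e by (auto simp: regular_idents_def)
    show "holds (A // \<theta>) (quot_ops \<theta> ops) e" unfolding holds_def
    proof (intro allI impI)
      fix envQ :: "nat \<Rightarrow> 'a set" assume eQ: "\<forall>i. envQ i \<in> A // \<theta>"
      define \<rho> where "\<rho> i = (SOME x. x \<in> A \<and> envQ i = \<theta> `` {x})" for i
      have \<rho>: "\<rho> i \<in> A \<and> envQ i = \<theta> `` {\<rho> i}" for i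
      proof -
        obtain x where "x \<in> A" "envQ i = \<theta> `` {x}" using eQ[rule_format, of i] by (rule quotientE)
        then have "\<exists>x. x \<in> A \<and> envQ i = \<theta> `` {x}" by blast
        then show ?thesis unfolding \<rho>_def by (rule someI_ex)
      qed
      have eQ': "envQ = (\<lambda>i. \<theta> `` {\<rho> i})" using \<rho> by auto
      have "(eval ops \<rho> u, eval ops \<rho> v) \<in> \<theta>" using REG[OF uv(2,3,4)] \<rho> by blast
      then have "\<theta> `` {eval ops \<rho> u} = \<theta> `` {eval ops \<rho> v}" using eqv equiv_class_eq by metis
      then show "eval (quot_ops \<theta> ops) envQ (fst e) = eval (quot_ops \<theta> ops) envQ (snd e)"
        using quot_eval[OF cg isA uv(2)] quot_eval[OF cg isA uv(3)] \<rho> eQ' uv(1) by auto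
    qed
  qed
  have cls: "models ar X ops E" if XQ: "X \<in> A // \<theta>" for X
  proof -
    obtain a where aA: "a \<in> A" and Xa: "X = \<theta> `` {a}" using XQ by (auto elim: quotientE)
    have XA: "X \<subseteq> A" using XQ eqv in_quotient_imp_subset by blast
    have algX: "is_alg ar X ops" unfolding is_alg_def
    proof (intro allI impI)
      fix f xs assume a: "length xs = ar f \<and> set xs \<subseteq> X"
      define k where "k = ar f"
      have k: "k \<ge> 1" using nn k_def by auto
      have "(ops f (replicate k a), ops f xs) \<in> \<theta>"
      proof (rule opcong)
        have h: "\<forall>x\<in>set xs. (a, x) \<in> \<theta>" using a Xa by auto
        have "(a, xs ! i) \<in> \<theta>" if "i < length xs" for i using h nth_mem[OF that] by blast
        then show "list_all2 (\<lambda>x y. (x, y) \<in> \<theta>) (replicate k a) xs"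
          using a k_def by (simp add: list_all2_conv_all_nth)
        show "length (replicate k a) = ar f" "length xs = ar f" using a k_def by auto
        show "set (replicate k a) \<subseteq> A" using aA by auto
        show "set xs \<subseteq> A" using a XA by auto
      qed
      moreover have "(a, ops f (replicate k a)) \<in> \<theta>"
      proof -
        have "(eval ops (\<lambda>_. a) (Var 0), eval ops (\<lambda>_. a) (Op f (replicate k (Var 0)))) \<in> \<theta>"
          by (rule REG) (use aA k k_def in auto)
        then show ?thesis by (simp add: map_replicate_const)
      qed
      ultimately have "(a, ops f xs) \<in> \<theta>" using trans by blast
      then show "ops f xs \<in> X" using Xa by simp
    qed
    have rX: "(x, y) \<in> \<theta>" if "x \<in> X" "y \<in> X" for x y
    proof -
      have "(a, x) \<in> \<theta>" "(a, y) \<in> \<theta>" using that Xa by auto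
      then show ?thesis by (meson sym trans)
    qed
    show ?thesis unfolding models_def
    proof (intro conjI algX ballI)
      fix uv assume uvE: "uv \<in> E"
      obtain u v where uvd: "uv = (u, v)" by force
      define S where "S = vars u \<union> vars v"
      have finS: "finite S" using finite_vars S_def by auto
      define m where "m = Suc (Max (insert 0 S))"
      have m0: "0 < m" using m_def by simp
      have iS: "Suc i \<le> m" if "i \<in> S" for i using that finS m_def by simp
      obtain W where W: "W \<in> T ar m" using Tex[OF m0] by blast
      show "holds X ops uv" unfolding holds_def
      proof (intro allI impI)
        fix env :: "nat \<Rightarrow> 'a" assume env: "\<forall>i. env i \<in> X"
        define c where "c j = env (j - 1)" for j
        have cX: "\<forall>j. c j \<in> X" using env c_def by auto
        have cA: "\<forall>j. c j \<in> A" using cX XA by auto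
        define r where "r i = tapp (Var (Suc i)) W" for i
        have rT: "r i \<in> T ar m" if "i \<in> S" for i
          using W iS[OF that] by (auto simp: T_def r_def tapp_wf tapp_vars)
        have wX: "eval ops c W \<in> X" using eval_closed[OF algX _ cX] W by (auto simp: T_def)
        have evr: "eval ops c (r i) = env i" for i
        proof -
          have "eval ops c (r i) = tt (env i) (eval ops c W)" by (simp add: r_def tapp_eval c_def)
          also have "\<dots> = env i" using rX[OF env[rule_format] wX] unfolding \<theta>_def by auto
          finally show ?thesis .
        qed
        have "(subst r u, subst r v) \<in> prolong ar E"
          using uvE uvd rT m0 S_def by (intro prolongI) auto
        then have "eval ops c (subst r u) = eval ops c (subst r v)"
          using M cA by (auto simp: models_def holds_def)
        then show "eval ops env (fst uv) = eval ops env (snd uv)"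
          using uvd evr by (simp add: eval_subst)
      qed
    qed
  qed
  show ?thesis unfolding malcev_S_def using isA cg sl cls by blast
qed


theorem theorem5p4:
  fixes ar :: "'f \<Rightarrow> nat" and \<Sigma> :: "('f trm \<times> 'f trm) set" and t :: "'f trm"
  assumes no_nullary: "\<forall>f. ar f \<ge> 1"
      and plural: "\<exists>f. ar f \<ge> 2"
      and Sigma_idents: "\<Sigma> \<subseteq> idents ar"
      and t_T2: "t \<in> T ar 2"
      and t_id: "(t, Var 1) \<in> Id_of ar \<Sigma>"
  shows "(\<forall>(A :: 'a set) ops. malcev_S ar \<Sigma> A ops \<longleftrightarrow> models ar A ops (prolong ar (Id_of ar \<Sigma>)))
       \<and> (\<forall>(A :: 'a set) ops. malcev_S ar \<Sigma> A ops \<longleftrightarrow> models ar A ops (prolong ar \<Sigma>))"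
proof -
  have SI: "\<Sigma> \<subseteq> Id_of ar \<Sigma>"
  proof
    fix e assume e: "e \<in> \<Sigma>"
    then have "e \<in> idents ar" using Sigma_idents by blast
    moreover have "\<forall>(B :: 'f trm set set) opsB. models ar B opsB \<Sigma> \<longrightarrow> holds B opsB e"
      using e unfolding models_def by blast
    ultimately show "e \<in> Id_of ar \<Sigma>" unfolding Id_of_def by blast
  qed
  have PM: "prolong ar \<Sigma> \<subseteq> prolong ar (Id_of ar \<Sigma>)"
  proof
    fix e assume "e \<in> prolong ar \<Sigma>"
    then obtain u v r m where e: "e = (subst r u, subst r v)" and uv: "(u, v) \<in> \<Sigma>"
      and m: "m > 0" and r: "\<forall>i \<in> vars u \<union> vars v. r i \<in> T ar m"
      unfolding prolong_def by blast
    have "(u, v) \<in> Id_of ar \<Sigma>" using uv SI by blast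
    then show "e \<in> prolong ar (Id_of ar \<Sigma>)" using e m r by (simp add: prolongI)
  qed
  have A: "malcev_S ar \<Sigma> A ops \<longleftrightarrow> models ar A ops (prolong ar (Id_of ar \<Sigma>))"
    and B: "malcev_S ar \<Sigma> A ops \<longleftrightarrow> models ar A ops (prolong ar \<Sigma>)" for A :: "'a set" and ops
  proof -
    have 1: "malcev_S ar \<Sigma> A ops \<Longrightarrow> models ar A ops (prolong ar (Id_of ar \<Sigma>))"
      by (rule dir1[OF no_nullary Sigma_idents])
    have 2: "models ar A ops (prolong ar (Id_of ar \<Sigma>)) \<Longrightarrow> models ar A ops (prolong ar \<Sigma>)"
      using PM models_mono by blast
    have 3: "models ar A ops (prolong ar \<Sigma>) \<Longrightarrow> malcev_S ar \<Sigma> A ops"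
      by (rule dir2[OF no_nullary Sigma_idents t_T2 t_id])
    show "malcev_S ar \<Sigma> A ops \<longleftrightarrow> models ar A ops (prolong ar (Id_of ar \<Sigma>))" using 1 2 3 by blast
    show "malcev_S ar \<Sigma> A ops \<longleftrightarrow> models ar A ops (prolong ar \<Sigma>)" using 1 2 3 by blast
  qed
  show ?thesis using A B by blast
qed

end
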